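(* Let $X$ be a non-empty set, $R$ a binary relation on $X$, and $\tau$ a compact topology on $X$. Suppose $R$ is upper tc-semicontinuous with respect to $\tau$. Then the family $\mu(\Xi,\widetilde{R})$ of $\widetilde{R}$-maximal strong components of $(X,R)$ is non-empty.
   Context: For a binary relation $R$ on $X$, the transitive closure $\overline{R}$ is defined by: $x\overline{R}y$ iff there exist $K\ge 1$ and $x_0,\dots,x_K\in X$ with $x_0=x$, $x_K=y$, and $x_{k-1}Rx_k$ for all $k\in\{1,\dots,K\}$. $R$ is upper tc-semicontinuous with respect to $\tau$ if for every $x\in X$ the set $\{y\in X: x\overline{R}y\}$ is open in $\tau$. A topology is compact if every open cover of $X$ has a finite subcover. Strong components: define the equivalence relation $x\sim y$ iff $x=y$ or ($x\overline{R}y$ and $y\overline{R}x$). The ground sets of the strong components of $(X,R)$ are the equivalence classes of $\sim$ (so an element lying on no cycle forms a singleton component); they partition $X$. Let $\Xi=\{X_i : i\in I\}$ be the set of these classes. The contraction of $(X,R)$ is $(\Xi,\widetilde{R})$, where $X_i\widetilde{R}X_j$ iff there exist $x\in X_i$, $y\in X_j$ with $xRy$. A class $X_i\in\Xi$ is $\widetilde{R}$-maximal if there is no $X_j\in\Xi$ with $X_j\ne X_i$ and $X_j\widetilde{R}X_i$. $\mu(\Xi,\widetilde{R})$ denotes the family of $\widetilde{R}$-maximal classes in $\Xi$. *)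

theory Defs
  imports "HOL-Analysis.Abstract_Topology"
begin

definition upper_tc_semicontinuous :: "'a set \<Rightarrow> ('a \<times> 'a) set \<Rightarrow> 'a topology \<Rightarrow> bool" where
  "upper_tc_semicontinuous X R \<tau> \<longleftrightarrow> (\<forall>x\<in>X. openin \<tau> {y \<in> X. (x, y) \<in> R\<^sup>+})"

definition strong_equiv :: "'a set \<Rightarrow> ('a \<times> 'a) set \<Rightarrow> ('a \<times> 'a) set" where
  "strong_equiv X R = {(x, y). x \<in> X \<and> y \<in> X \<and>
      (x = y \<or> ((x, y) \<in> R\<^sup>+ \<and> (y, x) \<in> R\<^sup>+))}"

definition strong_components :: "'a set \<Rightarrow> ('a \<times> 'a) set \<Rightarrow> 'a set set" where
  "strong_components X R = X // strong_equiv X R"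

definition contraction_rel :: "'a set \<Rightarrow> ('a \<times> 'a) set \<Rightarrow> ('a set \<times> 'a set) set" where
  "contraction_rel X R = {(A, B). A \<in> strong_components X R \<and> B \<in> strong_components X R \<and>
      (\<exists>x\<in>A. \<exists>y\<in>B. (x, y) \<in> R)}"

definition maximal_components :: "'a set \<Rightarrow> ('a \<times> 'a) set \<Rightarrow> 'a set set" where
  "maximal_components X R = {C \<in> strong_components X R.
      \<not> (\<exists>D \<in> strong_components X R. D \<noteq> C \<and> (D, C) \<in> contraction_rel X R)}"

end

theory Submission
  imports Defs
begin

lemma se_equiv: "equiv X (strong_equiv X R)"
  unfolding equiv_def refl_on_def sym_def trans_def strong_equiv_def
  by (auto intro: trancl_trans)

lemma max_exists:
  assumes R: "R \<subseteq> X \<times> X" and x: "x \<in> X"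
    and h: "\<forall>z. (z, x) \<in> R\<^sup>+ \<longrightarrow> (x, z) \<in> R\<^sup>+"
  shows "maximal_components X R \<noteq> {}"
proof -
  let ?E = "strong_equiv X R"
  let ?C = "?E `` {x}"
  have eq: "equiv X ?E" by (rule se_equiv)
  have C: "?C \<in> strong_components X R"
    unfolding strong_components_def using x by (rule quotientI)
  have "?C \<in> maximal_components X R"
    unfolding maximal_components_def
  proof (clarsimp simp: C)
    fix D assume D: "D \<in> strong_components X R" and ne: "D \<noteq> ?C"
      and DC: "(D, ?C) \<in> contraction_rel X R"
    then obtain a b where a: "a \<in> D" and b: "b \<in> ?C" and ab: "(a, b) \<in> R"
      unfolding contraction_rel_def by blast
    have aX: "a \<in> X" using ab R by auto
    have "b = x \<or> (b, x) \<in> R\<^sup>+" using b unfolding strong_equiv_def by auto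
    hence "(a, x) \<in> R\<^sup>+" using ab by (auto intro: trancl_into_trancl2)
    hence "(x, a) \<in> R\<^sup>+" using h by blast
    hence "a \<in> ?C" using \<open>(a, x) \<in> R\<^sup>+\<close> aX x unfolding strong_equiv_def by auto
    hence "D = ?C" using quotient_disj[OF eq] D C a unfolding strong_components_def
      by blast
    thus False using ne by simp
  qed
  thus ?thesis by blast
qed

theorem lemma2:
  fixes X :: "'a set" and R :: "('a \<times> 'a) set" and \<tau> :: "'a topology"
  assumes "X \<noteq> {}"
    and "R \<subseteq> X \<times> X"
    and "topspace \<tau> = X"
    and "compact_space \<tau>"
    and "upper_tc_semicontinuous X R \<tau>"
  shows "maximal_components X R \<noteq> {}"
proof (rule ccontr)
  assume nm: "\<not> maximal_components X R \<noteq> {}"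
  define U where "U z = {y \<in> X. (z, y) \<in> R\<^sup>+}" for z
  have nh: "\<forall>x\<in>X. \<exists>z. (z, x) \<in> R\<^sup>+ \<and> (x, z) \<notin> R\<^sup>+"
    using max_exists[OF assms(2)] nm by blast
  have op: "\<forall>V\<in>U ` X. openin \<tau> V"
    using assms(5) unfolding upper_tc_semicontinuous_def U_def by auto
  have cov: "topspace \<tau> \<subseteq> \<Union>(U ` X)"
  proof
    fix x assume "x \<in> topspace \<tau>"
    hence xX: "x \<in> X" using assms(3) by simp
    then obtain z where z: "(z, x) \<in> R\<^sup>+" "(x, z) \<notin> R\<^sup>+" using nh by blast
    have "z \<in> X" using z(1) assms(2) by (metis SigmaD1 subsetD trancl_subset_Sigma)
    thus "x \<in> \<Union>(U ` X)" using z xX unfolding U_def by blast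
  qed
  obtain B where B: "finite B" "B \<subseteq> U ` X" "topspace \<tau> \<subseteq> \<Union>B"
    using assms(4) op cov unfolding compact_space_def compactin_def by metis
  obtain F where F: "F \<subseteq> X" "finite F" "B = U ` F"
    using finite_subset_image[OF B(1) B(2)] by blast
  have Fne: "F \<noteq> {}" using B(3) F(3) assms(1,3) by auto
  define S where "S = {(a, b). a \<in> F \<and> b \<in> F \<and> (a, b) \<in> R\<^sup>+ \<and> (b, a) \<notin> R\<^sup>+}"
  have "S \<subseteq> F \<times> F" unfolding S_def by auto
  hence finS: "finite S" using F(2) by (meson finite_SigmaI finite_subset)
  have "trans S" unfolding S_def trans_def by (auto intro: trancl_trans)
  moreover have "irrefl S" unfolding S_def irrefl_def by auto
  ultimately have "acyclic S"
    by (simp add: acyclic_irrefl irrefl_def trancl_id)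
  hence "wf S" using finS finite_acyclic_wf by blast
  then obtain k where k: "k \<in> F" "\<forall>y. (y, k) \<in> S \<longrightarrow> y \<notin> F"
  proof -
    obtain f where "f \<in> F" using Fne by blast
    then obtain k where "k \<in> F" "\<forall>y. (y, k) \<in> S \<longrightarrow> y \<notin> F"
      using \<open>wf S\<close> unfolding wf_eq_minimal by blast
    thus ?thesis using that by blast
  qed
  obtain z where z: "(z, k) \<in> R\<^sup>+" "(k, z) \<notin> R\<^sup>+" using nh k(1) F(1) by blast
  have "z \<in> X" using z(1) assms(2) by (metis SigmaD1 subsetD trancl_subset_Sigma)
  then obtain j where j: "j \<in> F" "z \<in> U j" using B(3) F(3) assms(3) by auto
  have jz: "(j, z) \<in> R\<^sup>+" using j unfolding U_def by simp
  hence "(j, k) \<in> R\<^sup>+" using z(1) by (rule trancl_trans)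
  hence "(k, j) \<in> R\<^sup>+" using k j(1) unfolding S_def by blast
  hence "(k, z) \<in> R\<^sup>+" using jz by (rule trancl_trans)
  thus False using z(2) by simp
qed

end
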